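(* Let $1\le j\le k$ be integers, let $G$ and $H$ be complementary $(j,k)$-bicliques, and let $g(x)$, $h(x)$ be the interesting factors of $P_G(x)$ and $P_H(x)$ respectively. Then $$g(x)=(-1)^j\,h(-x+j+k-1).$$
   Context: All graphs are finite and simple. For integers $1\le j\le k$, a $(j,k)$-biclique is a graph whose vertex set is the disjoint union of a $j$-clique and a $k$-clique, with an arbitrary set of additional edges (bridging edges) each joining a vertex of the $j$-clique to a vertex of the $k$-clique. Two $(j,k)$-bicliques $G,H$ on the same two cliques are complementary if $H$ is obtained from $G$ by replacing every bridging edge by a non-edge and every non-adjacent pair (one vertex in each clique) by an edge, keeping both cliques. $P_G(x)$ is the chromatic polynomial; $(x)_n=x(x-1)\cdots(x-n+1)$. The interesting factor of a $(j,k)$-biclique $G$ is the degree-$j$ polynomial $P_G(x)/(x)_k$. *)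

theory Defs
  imports Complex_Main "HOL-Library.FuncSet" "HOL-Computational_Algebra.Polynomial"
begin

definition proper_colorings :: "'a set \<Rightarrow> ('a \<Rightarrow> 'a \<Rightarrow> bool) \<Rightarrow> nat \<Rightarrow> ('a \<Rightarrow> nat) set" where
  "proper_colorings V adj n =
     {c \<in> V \<rightarrow>\<^sub>E {..<n}. \<forall>u\<in>V. \<forall>v\<in>V. adj u v \<longrightarrow> c u \<noteq> c v}"

definition chromatic_poly :: "'a set \<Rightarrow> ('a \<Rightarrow> 'a \<Rightarrow> bool) \<Rightarrow> real poly" where
  "chromatic_poly V adj =
     (THE p. \<forall>n::nat. poly p (of_nat n) = of_nat (card (proper_colorings V adj n)))"

definition falling_poly :: "nat \<Rightarrow> real poly" where
  "falling_poly k = (\<Prod>i<k. [:- of_nat i, 1:])"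

text \<open>Adjacency of the (j,k)-biclique with cliques A (size j) and B (size k)
and set of bridging edges F \<subseteq> A \<times> B.\<close>
definition biclique_adj :: "'a set \<Rightarrow> 'a set \<Rightarrow> ('a \<times> 'a) set \<Rightarrow> 'a \<Rightarrow> 'a \<Rightarrow> bool" where
  "biclique_adj A B F u v \<longleftrightarrow>
     u \<noteq> v \<and> ((u \<in> A \<and> v \<in> A) \<or> (u \<in> B \<and> v \<in> B) \<or> (u, v) \<in> F \<or> (v, u) \<in> F)"

definition compl_bridges :: "'a set \<Rightarrow> 'a set \<Rightarrow> ('a \<times> 'a) set \<Rightarrow> ('a \<times> 'a) set" where
  "compl_bridges A B F = (A \<times> B) - F"

text \<open>Interesting factor P_G(x) / (x)_k, k = |B| the larger clique.\<close>
definition interesting_factor :: "'a set \<Rightarrow> 'a set \<Rightarrow> ('a \<times> 'a) set \<Rightarrow> real poly" where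
  "interesting_factor A B F =
     chromatic_poly (A \<union> B) (biclique_adj A B F) div falling_poly (card B)"

end

theory Submission
  imports Defs
begin

definition IA :: "'a set \<Rightarrow> 'c set \<Rightarrow> ('a \<times> 'c) set \<Rightarrow> ('a \<Rightarrow> 'c) set" where
  "IA A C R = {f \<in> A \<rightarrow>\<^sub>E C. inj_on f A \<and> (\<forall>a\<in>A. (a, f a) \<notin> R)}"

definition matchings :: "('a \<times> 'c) set \<Rightarrow> ('a \<times> 'c) set set" where
  "matchings R = {S. S \<subseteq> R \<and> inj_on fst S \<and> inj_on snd S}"

definition ff :: "nat \<Rightarrow> nat \<Rightarrow> nat" where "ff c m = (\<Prod>i<m. c - i)"

lemma finite_IA: "finite A \<Longrightarrow> finite C \<Longrightarrow> finite (IA A C R)"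
  unfolding IA_def by (rule finite_subset[OF _ finite_PiE]) auto

lemma card_inj_ff: "finite A \<Longrightarrow> finite C \<Longrightarrow> card {f \<in> A \<rightarrow>\<^sub>E C. inj_on f A} = ff (card C) (card A)"
  using card_inj_on_subset_funcset[of A C A] by (simp add: ff_def atLeast0LessThan)

lemma IA_restrict:
  assumes "a \<in> A" "c \<in> C" "(a, c) \<notin> R"
  shows "bij_betw (\<lambda>f. restrict f (A - {a})) {f \<in> IA A C R. f a = c} (IA (A - {a}) (C - {c}) R)"
proof (rule bij_betw_byWitness[where f'="\<lambda>g. g(a := c)"])
  show "\<forall>f\<in>{f \<in> IA A C R. f a = c}. (restrict f (A - {a}))(a := c) = f"
    by (auto simp: IA_def restrict_def fun_eq_iff PiE_def extensional_def)
  show "\<forall>g\<in>IA (A - {a}) (C - {c}) R. restrict (g(a := c)) (A - {a}) = g"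
    by (auto simp: IA_def restrict_def fun_eq_iff PiE_def extensional_def)
  show "(\<lambda>f. restrict f (A - {a})) ` {f \<in> IA A C R. f a = c} \<subseteq> IA (A - {a}) (C - {c}) R"
  proof
    fix g assume "g \<in> (\<lambda>f. restrict f (A - {a})) ` {f \<in> IA A C R. f a = c}"
    then obtain f where f: "f \<in> IA A C R" "f a = c" and g: "g = restrict f (A - {a})" by blast
    have "\<forall>x\<in>A - {a}. f x \<noteq> c" using f assms(1) unfolding IA_def inj_on_def by force
    then show "g \<in> IA (A - {a}) (C - {c}) R" using f unfolding g IA_def inj_on_def by auto
  qed
  show "(\<lambda>g. g(a := c)) ` IA (A - {a}) (C - {c}) R \<subseteq> {f \<in> IA A C R. f a = c}"
  proof
    fix f assume "f \<in> (\<lambda>g. g(a := c)) ` IA (A - {a}) (C - {c}) R"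
    then obtain g where g: "g \<in> IA (A - {a}) (C - {c}) R" and f: "f = g(a := c)" by blast
    have "inj_on f A"
      using g assms unfolding f IA_def inj_on_def by (auto simp: PiE_def Pi_def)
    then show "f \<in> {f \<in> IA A C R. f a = c}" using g assms unfolding f IA_def
      by (auto simp: PiE_def Pi_def extensional_def)
  qed
qed

lemma KR:
  assumes "finite A" "finite C" "a \<in> A" "c \<in> C" "(a, c) \<notin> R"
  shows "card (IA A C R) = card (IA A C (insert (a, c) R)) + card (IA (A - {a}) (C - {c}) R)"
proof -
  have eq: "IA A C R = IA A C (insert (a, c) R) \<union> {f \<in> IA A C R. f a = c}"
    using assms(3) by (auto simp: IA_def)
  have "card (IA A C R) = card (IA A C (insert (a, c) R)) + card {f \<in> IA A C R. f a = c}"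
    by (subst eq, rule card_Un_disjoint)
       (use assms(1-3) finite_IA[OF assms(1,2)] in \<open>auto simp: IA_def intro: finite_subset[OF _ finite_IA[OF assms(1,2)]]\<close>)
  also have "card {f \<in> IA A C R. f a = c} = card (IA (A - {a}) (C - {c}) R)"
    by (rule bij_betw_same_card[OF IA_restrict[OF assms(3-5)]])
  finally show ?thesis .
qed

lemma finite_matchings: "finite R \<Longrightarrow> finite (matchings R)"
  unfolding matchings_def by (rule finite_subset[of _ "Pow R"]) auto

lemma matchings_finite_mem: "finite R \<Longrightarrow> S \<in> matchings R \<Longrightarrow> finite S"
  unfolding matchings_def using finite_subset by blast

lemma MR:
  assumes "(a, c) \<notin> R"
  shows "matchings (insert (a, c) R) =
     matchings R \<union> insert (a, c) ` matchings {p \<in> R. fst p \<noteq> a \<and> snd p \<noteq> c}"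
proof (intro equalityI subsetI)
  fix S assume S: "S \<in> matchings (insert (a, c) R)"
  show "S \<in> matchings R \<union> insert (a, c) ` matchings {p \<in> R. fst p \<noteq> a \<and> snd p \<noteq> c}"
  proof (cases "(a, c) \<in> S")
    case False then show ?thesis using S by (auto simp: matchings_def)
  next
    case True
    have m: "S \<subseteq> insert (a, c) R" "inj_on fst S" "inj_on snd S" using S by (auto simp: matchings_def)
    have "S - {(a, c)} \<subseteq> {p \<in> R. fst p \<noteq> a \<and> snd p \<noteq> c}"
    proof
      fix p assume p: "p \<in> S - {(a, c)}"
      have "fst p \<noteq> a" using p True m(2) unfolding inj_on_def by (metis DiffE fst_conv singletonI)
      moreover have "snd p \<noteq> c" using p True m(3) unfolding inj_on_def by (metis DiffE snd_conv singletonI)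
      ultimately show "p \<in> {p \<in> R. fst p \<noteq> a \<and> snd p \<noteq> c}" using p m(1) by auto
    qed
    then have "S - {(a, c)} \<in> matchings {p \<in> R. fst p \<noteq> a \<and> snd p \<noteq> c}"
      using m inj_on_subset[of fst S "S - {(a,c)}"] inj_on_subset[of snd S "S - {(a,c)}"]
      unfolding matchings_def by blast
    moreover have "S = insert (a, c) (S - {(a, c)})" using True by auto
    ultimately show ?thesis by blast
  qed
next
  fix S assume "S \<in> matchings R \<union> insert (a, c) ` matchings {p \<in> R. fst p \<noteq> a \<and> snd p \<noteq> c}"
  then show "S \<in> matchings (insert (a, c) R)"
  proof
    assume "S \<in> matchings R" then show ?thesis by (auto simp: matchings_def)
  next
    assume "S \<in> insert (a, c) ` matchings {p \<in> R. fst p \<noteq> a \<and> snd p \<noteq> c}"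
    then obtain T where T: "T \<in> matchings {p \<in> R. fst p \<noteq> a \<and> snd p \<noteq> c}" and S: "S = insert (a, c) T"
      by blast
    have "a \<notin> fst ` T" "c \<notin> snd ` T" using T by (auto simp: matchings_def)
    then show ?thesis using T unfolding S matchings_def by auto
  qed
qed

lemma MR_sum:
  fixes w :: "nat \<Rightarrow> real"
  assumes "finite R" "(a, c) \<notin> R"
  shows "(\<Sum>S\<in>matchings (insert (a, c) R). w (card S)) =
     (\<Sum>S\<in>matchings R. w (card S)) + (\<Sum>S\<in>matchings {p \<in> R. fst p \<noteq> a \<and> snd p \<noteq> c}. w (card S + 1))"
proof -
  let ?R' = "{p \<in> R. fst p \<noteq> a \<and> snd p \<noteq> c}"
  have fR': "finite ?R'" using assms(1) by auto
  have notin: "(a, c) \<notin> S" if "S \<in> matchings ?R'" for S using that assms(2) by (auto simp: matchings_def)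
  have inj: "inj_on (insert (a, c)) (matchings ?R')"
  proof (rule inj_onI)
    fix S T assume "S \<in> matchings ?R'" "T \<in> matchings ?R'" "insert (a, c) S = insert (a, c) T"
    then show "S = T" using notin[of S] notin[of T] by (metis Diff_insert_absorb)
  qed
  have disj: "matchings R \<inter> insert (a, c) ` matchings ?R' = {}"
    using assms(2) by (auto simp: matchings_def)
  have "(\<Sum>S\<in>matchings (insert (a, c) R). w (card S)) =
     (\<Sum>S\<in>matchings R. w (card S)) + (\<Sum>S\<in>insert (a, c) ` matchings ?R'. w (card S))"
    unfolding MR[OF assms(2)]
    by (rule sum.union_disjoint) (use assms finite_matchings[OF fR'] finite_matchings[OF assms(1)] disj in auto)
  also have "(\<Sum>S\<in>insert (a, c) ` matchings ?R'. w (card S)) = (\<Sum>S\<in>matchings ?R'. w (card (insert (a,c) S)))"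
    using inj by (simp add: sum.reindex)
  also have "\<dots> = (\<Sum>S\<in>matchings ?R'. w (card S + 1))"
    by (rule sum.cong[OF refl]) (use matchings_finite_mem[OF fR'] notin in simp)
  finally show ?thesis .
qed

lemma IA_restrict_R:
  "IA (A - {a}) (C - {c}) R = IA (A - {a}) (C - {c}) {p \<in> R. fst p \<noteq> a \<and> snd p \<noteq> c}"
  unfolding IA_def by (auto simp: PiE_def Pi_def)

lemma IA_empty: "IA A C {} = {f \<in> A \<rightarrow>\<^sub>E C. inj_on f A}"
  unfolding IA_def by auto

lemma matchings_empty: "matchings {} = {{}}"
  unfolding matchings_def by auto

lemma IE:
  assumes "finite A" "finite C" "R \<subseteq> A \<times> C"
  shows "real (card (IA A C R)) =
    (\<Sum>S\<in>matchings R. (-1) ^ card S * real (ff (card C - card S) (card A - card S)))"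
  using assms
proof (induction "card R" arbitrary: A C R rule: less_induct)
  case less
  have finR: "finite R" using less.prems finite_subset by blast
  show ?case
  proof (cases "R = {}")
    case True
    then show ?thesis using less.prems by (simp add: IA_empty matchings_empty card_inj_ff)
  next
    case False
    then obtain a c where e: "(a, c) \<in> R" by auto
    have ac: "a \<in> A" "c \<in> C" using e less.prems by auto
    define R0 where "R0 = R - {(a, c)}"
    define R' where "R' = {p \<in> R0. fst p \<noteq> a \<and> snd p \<noteq> c}"
    have R: "R = insert (a, c) R0" using e unfolding R0_def by auto
    have e0: "(a, c) \<notin> R0" unfolding R0_def by auto
    have fR0: "finite R0" using finR unfolding R0_def by auto
    have c0: "card R0 < card R" using finR e unfolding R0_def by (metis card_Diff1_less)
    have c1: "card R' < card R" using c0 card_mono[OF fR0, of R'] unfolding R'_def by auto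
    have sub0: "R0 \<subseteq> A \<times> C" using less.prems unfolding R0_def by auto
    have sub1: "R' \<subseteq> (A - {a}) \<times> (C - {c})" using sub0 unfolding R'_def by auto
    note IH0 = less.hyps[OF c0 less.prems(1,2) sub0]
    have fA: "finite (A - {a})" and fC: "finite (C - {c})" using less.prems by auto
    note IH1 = less.hyps[OF c1 fA fC sub1]
    have K: "card (IA A C R0) = card (IA A C R) + card (IA (A - {a}) (C - {c}) R')"
      using KR[OF less.prems(1,2) ac e0] IA_restrict_R[of A a C c R0] unfolding R R'_def by simp
    define w where "w = (\<lambda>s. (-1) ^ s * real (ff (card C - s) (card A - s)))"
    have M: "(\<Sum>S\<in>matchings R. w (card S)) =
       (\<Sum>S\<in>matchings R0. w (card S)) + (\<Sum>S\<in>matchings R'. w (card S + 1))"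
      unfolding R R'_def by (rule MR_sum[OF fR0 e0])
    have "(\<Sum>S\<in>matchings R'. w (card S + 1)) =
       - (\<Sum>S\<in>matchings R'. (-1) ^ card S * real (ff (card (C - {c}) - card S) (card (A - {a}) - card S)))"
      unfolding w_def sum_negf[symmetric] using ac less.prems
      by (intro sum.cong refl) (simp add: card_Diff_singleton)
    then show ?thesis using K IH0 IH1 M unfolding w_def by simp
  qed
qed

lemma D:
  assumes "finite A" "finite T" "finite U" "T \<inter> U = {}" "R \<subseteq> A \<times> T"
  shows "real (card (IA A (T \<union> U) R)) =
    (\<Sum>S\<in>matchings (A \<times> T - R). real (ff (card U) (card A - card S)))"
  using assms
proof (induction "card (A \<times> T - R)" arbitrary: A T R rule: less_induct)
  case less
  have finP: "finite (A \<times> T - R)" using less.prems by auto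
  show ?case
  proof (cases "A \<times> T - R = {}")
    case True
    then have R: "R = A \<times> T" using less.prems by auto
    have "IA A (T \<union> U) R = {f \<in> A \<rightarrow>\<^sub>E U. inj_on f A}"
      using less.prems(4) unfolding R IA_def by (auto simp: PiE_def Pi_def)
    then show ?thesis using less.prems True by (simp add: matchings_empty card_inj_ff)
  next
    case False
    then obtain a t where e: "(a, t) \<in> A \<times> T - R" by auto
    have at: "a \<in> A" "t \<in> T" "(a, t) \<notin> R" "t \<notin> U" using e less.prems by auto
    define P0 where "P0 = (A \<times> T - R) - {(a, t)}"
    define R1 where "R1 = insert (a, t) R"
    define R' where "R' = {p \<in> R. fst p \<noteq> a \<and> snd p \<noteq> t}"
    have P0: "A \<times> T - R1 = P0" unfolding P0_def R1_def by auto
    have P: "A \<times> T - R = insert (a, t) P0" using e unfolding P0_def by auto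
    have e0: "(a, t) \<notin> P0" unfolding P0_def by auto
    have fP0: "finite P0" using finP unfolding P0_def by auto
    have c0: "card (A \<times> T - R1) < card (A \<times> T - R)" unfolding P0 P using fP0 e0 by simp
    have P': "(A - {a}) \<times> (T - {t}) - R' = {p \<in> P0. fst p \<noteq> a \<and> snd p \<noteq> t}"
      unfolding P0_def R'_def by auto
    have c1: "card ((A - {a}) \<times> (T - {t}) - R') < card (A \<times> T - R)"
      unfolding P' P using fP0 e0 card_mono[OF fP0, of "{p \<in> P0. fst p \<noteq> a \<and> snd p \<noteq> t}"]
      by simp
    have sub1: "R1 \<subseteq> A \<times> T" using less.prems at unfolding R1_def by auto
    have sub2: "R' \<subseteq> (A - {a}) \<times> (T - {t})" using less.prems unfolding R'_def by auto
    note IH0 = less.hyps[OF c0 less.prems(1-4) sub1]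
    have fA: "finite (A - {a})" and fT: "finite (T - {t})" and dj: "(T - {t}) \<inter> U = {}"
      using less.prems by auto
    note IH1 = less.hyps[OF c1 fA fT less.prems(3) dj sub2]
    have TU: "T \<union> U - {t} = (T - {t}) \<union> U" using at by auto
    have K: "card (IA A (T \<union> U) R) = card (IA A (T \<union> U) R1) + card (IA (A - {a}) ((T - {t}) \<union> U) R')"
      using KR[of A "T \<union> U" a t R] less.prems at IA_restrict_R[of A a "T \<union> U" t R]
      unfolding R1_def R'_def TU by simp
    define w where "w = (\<lambda>s. real (ff (card U) (card A - s)))"
    have M: "(\<Sum>S\<in>matchings (A \<times> T - R). w (card S)) =
       (\<Sum>S\<in>matchings P0. w (card S)) + (\<Sum>S\<in>matchings {p \<in> P0. fst p \<noteq> a \<and> snd p \<noteq> t}. w (card S + 1))"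
      unfolding P by (rule MR_sum[OF fP0 e0])
    have "(\<Sum>S\<in>matchings {p \<in> P0. fst p \<noteq> a \<and> snd p \<noteq> t}. w (card S + 1)) =
       (\<Sum>S\<in>matchings ((A - {a}) \<times> (T - {t}) - R'). real (ff (card U) (card (A - {a}) - card S)))"
      unfolding w_def P' using at less.prems
      by (intro sum.cong refl) (simp add: card_Diff_singleton)
    then show ?thesis using K IH0 IH1 M unfolding w_def P0 by simp
  qed
qed

definition Rs :: "('a \<times> 'b) set \<Rightarrow> ('b \<Rightarrow> 'c) \<Rightarrow> ('a \<times> 'c) set" where
  "Rs F \<sigma> = map_prod id \<sigma> ` F"

lemma proper_iff:
  assumes "A \<inter> B = {}" "F \<subseteq> A \<times> B"
  shows "c \<in> proper_colorings (A \<union> B) (biclique_adj A B F) n \<longleftrightarrow>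
    c \<in> (A \<union> B) \<rightarrow>\<^sub>E {..<n} \<and> inj_on c A \<and> inj_on c B \<and> (\<forall>p\<in>F. c (fst p) \<noteq> c (snd p))"
proof -
  have "(\<forall>u\<in>A \<union> B. \<forall>v\<in>A \<union> B. biclique_adj A B F u v \<longrightarrow> c u \<noteq> c v) \<longleftrightarrow>
      inj_on c A \<and> inj_on c B \<and> (\<forall>p\<in>F. c (fst p) \<noteq> c (snd p))"
  proof
    assume H: "\<forall>u\<in>A \<union> B. \<forall>v\<in>A \<union> B. biclique_adj A B F u v \<longrightarrow> c u \<noteq> c v"
    have "inj_on c A"
    proof (rule inj_onI, rule ccontr)
      fix x y assume "x \<in> A" "y \<in> A" "c x = c y" "x \<noteq> y"
      then have "biclique_adj A B F x y" unfolding biclique_adj_def by blast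
      then show False using H \<open>x \<in> A\<close> \<open>y \<in> A\<close> \<open>c x = c y\<close> by blast
    qed
    moreover have "inj_on c B"
    proof (rule inj_onI, rule ccontr)
      fix x y assume "x \<in> B" "y \<in> B" "c x = c y" "x \<noteq> y"
      then have "biclique_adj A B F x y" unfolding biclique_adj_def by blast
      then show False using H \<open>x \<in> B\<close> \<open>y \<in> B\<close> \<open>c x = c y\<close> by blast
    qed
    moreover have "\<forall>p\<in>F. c (fst p) \<noteq> c (snd p)"
    proof
      fix p assume p: "p \<in> F"
      then have pa: "fst p \<in> A" "snd p \<in> B" using assms by auto
      then have "fst p \<noteq> snd p" using assms(1) by (metis IntI empty_iff)
      note pa = pa this
      have "biclique_adj A B F (fst p) (snd p)" using p pa unfolding biclique_adj_def by simp
      then show "c (fst p) \<noteq> c (snd p)" using H pa by blast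
    qed
    ultimately show "inj_on c A \<and> inj_on c B \<and> (\<forall>p\<in>F. c (fst p) \<noteq> c (snd p))" by blast
  next
    assume H: "inj_on c A \<and> inj_on c B \<and> (\<forall>p\<in>F. c (fst p) \<noteq> c (snd p))"
    show "\<forall>u\<in>A \<union> B. \<forall>v\<in>A \<union> B. biclique_adj A B F u v \<longrightarrow> c u \<noteq> c v"
    proof (intro ballI impI)
      fix u v assume adj: "biclique_adj A B F u v"
      then have uv: "u \<noteq> v" unfolding biclique_adj_def by blast
      from adj consider "u \<in> A \<and> v \<in> A" | "u \<in> B \<and> v \<in> B" | "(u, v) \<in> F" | "(v, u) \<in> F"
        unfolding biclique_adj_def by blast
      then show "c u \<noteq> c v"
      proof cases
        case 1 then show ?thesis using H uv unfolding inj_on_def by blast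
      next
        case 2 then show ?thesis using H uv unfolding inj_on_def by blast
      next
        case 3 then show ?thesis using H by fastforce
      next
        case 4 then show ?thesis using H by fastforce
      qed
    qed
  qed
  then show ?thesis unfolding proper_colorings_def by simp
qed

lemma card_proper:
  assumes "finite A" "finite B" "A \<inter> B = {}" "F \<subseteq> A \<times> B"
  shows "card (proper_colorings (A \<union> B) (biclique_adj A B F) n) =
    (\<Sum>\<sigma>\<in>{\<sigma> \<in> B \<rightarrow>\<^sub>E {..<n}. inj_on \<sigma> B}. card (IA A {..<n} (Rs F \<sigma>)))"
proof -
  let ?P = "proper_colorings (A \<union> B) (biclique_adj A B F) n"
  let ?IB = "{\<sigma> \<in> B \<rightarrow>\<^sub>E {..<n}. inj_on \<sigma> B}"
  let ?S = "SIGMA \<sigma>:?IB. IA A {..<n} (Rs F \<sigma>)"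
  define mg :: "('a \<Rightarrow> nat) \<times> ('a \<Rightarrow> nat) \<Rightarrow> 'a \<Rightarrow> nat" where "mg = (\<lambda>p x. if x \<in> B then fst p x else snd p x)"
  have bij: "bij_betw (\<lambda>c. (restrict c B, restrict c A)) ?P ?S"
  proof (rule bij_betw_byWitness[where f'=mg])
    show "\<forall>c\<in>?P. mg (restrict c B, restrict c A) = c"
    proof
      fix c assume "c \<in> ?P"
      then have "c \<in> (A \<union> B) \<rightarrow>\<^sub>E {..<n}" unfolding proper_iff[OF assms(3,4)] by blast
      then show "mg (restrict c B, restrict c A) = c" unfolding mg_def
        by (auto simp: fun_eq_iff PiE_def extensional_def)
    qed
    show "\<forall>y\<in>?S. (\<lambda>c. (restrict c B, restrict c A)) (mg y) = y"
    proof
      fix y assume "y \<in> ?S"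
      then have y: "fst y \<in> B \<rightarrow>\<^sub>E {..<n}" "snd y \<in> A \<rightarrow>\<^sub>E {..<n}" unfolding IA_def by auto
      have "restrict (mg y) B = fst y" using y(1) unfolding mg_def
        by (auto simp: fun_eq_iff PiE_def extensional_def)
      moreover have "restrict (mg y) A = snd y" using y(2) assms(3) unfolding mg_def
        by (auto simp: fun_eq_iff PiE_def extensional_def)
      ultimately show "(\<lambda>c. (restrict c B, restrict c A)) (mg y) = y" by simp
    qed
    show "(\<lambda>c. (restrict c B, restrict c A)) ` ?P \<subseteq> ?S"
    proof
      fix y assume "y \<in> (\<lambda>c. (restrict c B, restrict c A)) ` ?P"
      then obtain c where c: "c \<in> ?P" and y: "y = (restrict c B, restrict c A)" by blast
      note cc = c[unfolded proper_iff[OF assms(3,4)]]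
      have "\<forall>a\<in>A. (a, c a) \<notin> Rs F (restrict c B)"
      proof (intro ballI notI)
        fix a assume a: "a \<in> A" and "(a, c a) \<in> Rs F (restrict c B)"
        then obtain p where p: "p \<in> F" "(a, c a) = (fst p, restrict c B (snd p))"
          unfolding Rs_def by (auto simp: map_prod_def split: prod.splits)
        have "snd p \<in> B" using p(1) assms(4) by auto
        then show False using p cc by auto
      qed
      moreover have "restrict c B \<in> ?IB" using cc by (auto simp: PiE_def Pi_def)
      moreover have "restrict c A \<in> A \<rightarrow>\<^sub>E {..<n}" using cc by (auto simp: PiE_def Pi_def)
      moreover have "inj_on (restrict c A) A" using cc by (simp add: inj_on_def)
      ultimately show "y \<in> ?S" unfolding y IA_def by simp
    qed
    show "mg ` ?S \<subseteq> ?P"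
    proof
      fix c assume "c \<in> mg ` ?S"
      then obtain y where y: "y \<in> ?S" and c: "c = mg y" by blast
      define \<sigma> where "\<sigma> = fst y"
      define f where "f = snd y"
      have sf: "\<sigma> \<in> ?IB" "f \<in> IA A {..<n} (Rs F \<sigma>)" using y unfolding \<sigma>_def f_def by auto
      have cA: "\<forall>a\<in>A. c a = f a" and cB: "\<forall>b\<in>B. c b = \<sigma> b"
        using assms(3) unfolding c mg_def \<sigma>_def f_def by auto
      have "c \<in> (A \<union> B) \<rightarrow>\<^sub>E {..<n}"
      proof (rule PiE_I)
        fix x assume "x \<in> A \<union> B"
        then show "c x \<in> {..<n}" using sf cA cB unfolding IA_def by (auto simp: PiE_def Pi_def)
      next
        fix x assume "x \<notin> A \<union> B"
        then show "c x = undefined" using sf unfolding c mg_def \<sigma>_def f_def IA_def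
          by (auto simp: PiE_def extensional_def)
      qed
      moreover have "inj_on c A" using sf cA unfolding IA_def inj_on_def by auto
      moreover have "inj_on c B" using sf cB unfolding inj_on_def by auto
      moreover have "\<forall>p\<in>F. c (fst p) \<noteq> c (snd p)"
      proof
        fix p assume p: "p \<in> F"
        then have p1: "fst p \<in> A" "snd p \<in> B" using assms(4) by auto
        have "(fst p, \<sigma> (snd p)) = map_prod id \<sigma> p" by (cases p) simp
        then have "(fst p, \<sigma> (snd p)) \<in> Rs F \<sigma>" using p unfolding Rs_def by (metis image_eqI)
        then have "f (fst p) \<noteq> \<sigma> (snd p)" using sf p1 unfolding IA_def by auto
        then show "c (fst p) \<noteq> c (snd p)" using cA cB p1 by auto
      qed
      ultimately show "c \<in> ?P" unfolding proper_iff[OF assms(3,4)] by blast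
    qed
  qed
  have fIB: "finite ?IB" by (rule finite_subset[OF _ finite_PiE[OF assms(2), of "\<lambda>_. {..<n}"]]) auto
  have "card ?P = card ?S"
    using bij_betw_same_card[OF bij] .
  also have "\<dots> = (\<Sum>\<sigma>\<in>?IB. card (IA A {..<n} (Rs F \<sigma>)))"
    by (rule card_SigmaI) (use fIB finite_IA[OF assms(1) finite_lessThan] in blast)+
  finally show ?thesis .
qed

lemma matchings_image:
  assumes h: "inj_on h Q"
    and f: "\<forall>x\<in>Q. \<forall>y\<in>Q. fst (h x) = fst (h y) \<longleftrightarrow> fst x = fst y"
    and s: "\<forall>x\<in>Q. \<forall>y\<in>Q. snd (h x) = snd (h y) \<longleftrightarrow> snd x = snd y"
  shows "matchings (h ` Q) = image h ` matchings Q"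
proof (intro equalityI subsetI)
  fix T assume T: "T \<in> matchings (h ` Q)"
  define S where "S = {x \<in> Q. h x \<in> T}"
  have TS: "T = h ` S" using T unfolding S_def matchings_def by auto
  have "inj_on fst S"
  proof (rule inj_onI)
    fix x y assume xy: "x \<in> S" "y \<in> S" "fst x = fst y"
    then have "fst (h x) = fst (h y)" using f unfolding S_def by auto
    then have "h x = h y" using T xy unfolding S_def matchings_def inj_on_def by auto
    then show "x = y" using h xy unfolding S_def inj_on_def by auto
  qed
  moreover have "inj_on snd S"
  proof (rule inj_onI)
    fix x y assume xy: "x \<in> S" "y \<in> S" "snd x = snd y"
    then have "snd (h x) = snd (h y)" using s unfolding S_def by auto
    then have "h x = h y" using T xy unfolding S_def matchings_def inj_on_def by auto
    then show "x = y" using h xy unfolding S_def inj_on_def by auto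
  qed
  ultimately have "S \<in> matchings Q" unfolding S_def matchings_def by auto
  then show "T \<in> image h ` matchings Q" using TS by blast
next
  fix T assume "T \<in> image h ` matchings Q"
  then obtain S where S: "S \<in> matchings Q" and T: "T = h ` S" by blast
  have SQ: "S \<subseteq> Q" using S unfolding matchings_def by auto
  have "inj_on fst T"
  proof (rule inj_onI)
    fix u v assume "u \<in> T" "v \<in> T" "fst u = fst v"
    then obtain x y where xy: "x \<in> S" "y \<in> S" "u = h x" "v = h y" "fst (h x) = fst (h y)" unfolding T by auto
    then have "fst x = fst y" using f SQ by auto
    then show "u = v" using S xy unfolding matchings_def inj_on_def by auto
  qed
  moreover have "inj_on snd T"
  proof (rule inj_onI)
    fix u v assume "u \<in> T" "v \<in> T" "snd u = snd v"
    then obtain x y where xy: "x \<in> S" "y \<in> S" "u = h x" "v = h y" "snd (h x) = snd (h y)" unfolding T by auto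
    then have "snd x = snd y" using s SQ by auto
    then show "u = v" using S xy unfolding matchings_def inj_on_def by auto
  qed
  ultimately show "T \<in> matchings (h ` Q)" using SQ unfolding T matchings_def by auto
qed

lemma matchings_sum_image:
  fixes w :: "nat \<Rightarrow> real"
  assumes h: "inj_on h Q"
    and f: "\<forall>x\<in>Q. \<forall>y\<in>Q. fst (h x) = fst (h y) \<longleftrightarrow> fst x = fst y"
    and s: "\<forall>x\<in>Q. \<forall>y\<in>Q. snd (h x) = snd (h y) \<longleftrightarrow> snd x = snd y"
  shows "(\<Sum>S\<in>matchings (h ` Q). w (card S)) = (\<Sum>S\<in>matchings Q. w (card S))"
proof -
  have inj: "inj_on (image h) (matchings Q)"
    by (rule inj_on_image, rule inj_on_subset[OF h]) (auto simp: matchings_def)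
  have "(\<Sum>S\<in>matchings (h ` Q). w (card S)) = (\<Sum>S\<in>matchings Q. w (card (h ` S)))"
    unfolding matchings_image[OF assms] using inj by (simp add: sum.reindex)
  also have "\<dots> = (\<Sum>S\<in>matchings Q. w (card S))"
  proof (rule sum.cong[OF refl])
    fix S assume "S \<in> matchings Q"
    then have "S \<subseteq> Q" by (auto simp: matchings_def)
    then show "w (card (h ` S)) = w (card S)" using card_image[OF inj_on_subset[OF h]] by simp
  qed
  finally show ?thesis .
qed

lemma card_IA_sigma:
  assumes "finite A" "finite B" "F \<subseteq> A \<times> B" "\<sigma> \<in> B \<rightarrow>\<^sub>E {..<n}" "inj_on \<sigma> B"
  shows "real (card (IA A {..<n} (Rs F \<sigma>))) =
      (\<Sum>S\<in>matchings F. (-1) ^ card S * real (ff (n - card S) (card A - card S)))"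
    and "real (card (IA A {..<n} (Rs F \<sigma>))) =
      (\<Sum>S\<in>matchings (A \<times> B - F). real (ff (n - card B) (card A - card S)))"
proof -
  let ?h = "map_prod id \<sigma> :: _ \<Rightarrow> _ \<times> nat"
  have hinj: "inj_on ?h (A \<times> B)" using assms(5) unfolding inj_on_def by auto
  have hf: "\<forall>x\<in>Q. \<forall>y\<in>Q. fst (?h x) = fst (?h y) \<longleftrightarrow> fst x = fst y" for Q by simp
  have hs: "\<forall>x\<in>Q. \<forall>y\<in>Q. snd (?h x) = snd (?h y) \<longleftrightarrow> snd x = snd y" if "Q \<subseteq> A \<times> B" for Q
  proof (intro ballI)
    fix x y assume "x \<in> Q" "y \<in> Q"
    then have "snd x \<in> B" "snd y \<in> B" using that by auto
    then show "snd (?h x) = snd (?h y) \<longleftrightarrow> snd x = snd y"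
      using inj_on_eq_iff[OF assms(5)] by simp
  qed
  have sB: "\<sigma> ` B \<subseteq> {..<n}" using assms(4) by auto
  have RsA: "Rs F \<sigma> \<subseteq> A \<times> {..<n}" using assms(3) sB unfolding Rs_def by auto
  show "real (card (IA A {..<n} (Rs F \<sigma>))) =
      (\<Sum>S\<in>matchings F. (-1) ^ card S * real (ff (n - card S) (card A - card S)))"
    unfolding IE[OF assms(1) finite_lessThan RsA] card_lessThan unfolding Rs_def
    by (rule matchings_sum_image[where w="\<lambda>s. (-1) ^ s * real (ff (n - s) (card A - s))"])
       (use inj_on_subset[OF hinj assms(3)] hs[OF assms(3)] in auto)
  have C: "{..<n} = \<sigma> ` B \<union> ({..<n} - \<sigma> ` B)" using sB by auto
  have cU: "card ({..<n} - \<sigma> ` B) = n - card B"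
    using sB card_image[OF assms(5)] by (simp add: card_Diff_subset finite_subset[OF _ finite_imageI] assms(2))
  have RsT: "Rs F \<sigma> \<subseteq> A \<times> \<sigma> ` B" using assms(3) unfolding Rs_def by auto
  have img: "A \<times> \<sigma> ` B - Rs F \<sigma> = ?h ` (A \<times> B - F)"
  proof -
    have "?h ` (A \<times> B) = A \<times> \<sigma> ` B" by (auto simp: map_prod_def image_iff) 
    then show ?thesis unfolding Rs_def using inj_on_image_set_diff[OF hinj _ assms(3)] by auto
  qed
  have "real (card (IA A {..<n} (Rs F \<sigma>))) =
      (\<Sum>S\<in>matchings (A \<times> \<sigma> ` B - Rs F \<sigma>). real (ff (card ({..<n} - \<sigma> ` B)) (card A - card S)))"
    by (subst C, rule D) (use assms(1,2) RsT in auto)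
  also have "\<dots> = (\<Sum>S\<in>matchings (A \<times> B - F). real (ff (n - card B) (card A - card S)))"
    unfolding img cU
    by (rule matchings_sum_image[where w="\<lambda>s. real (ff (n - card B) (card A - s))"])
       (use inj_on_subset[OF hinj] hs in auto)
  finally show "real (card (IA A {..<n} (Rs F \<sigma>))) =
      (\<Sum>S\<in>matchings (A \<times> B - F). real (ff (n - card B) (card A - card S)))" .
qed

definition fpoly :: "nat \<Rightarrow> nat \<Rightarrow> real poly" where
  "fpoly s m = (\<Prod>i<m. [:- (real s + real i), 1:])"

lemma poly_fpoly: "poly (fpoly s m) x = (\<Prod>i<m. x - real s - real i)"
  unfolding fpoly_def by (simp add: poly_prod algebra_simps)

lemma falling_fpoly: "falling_poly k = fpoly 0 k"
  unfolding falling_poly_def fpoly_def by simp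

lemma real_ff: "real (ff c m) = (\<Prod>i<m. real c - real i)"
proof (cases "c < m")
  case True
  then have "ff c m = 0" unfolding ff_def by (intro prod_zero) auto
  moreover have "(\<Prod>i<m. real c - real i) = 0" using True by (intro prod_zero) auto
  ultimately show ?thesis by simp
next
  case False
  then show ?thesis unfolding ff_def by (simp add: of_nat_prod of_nat_diff)
qed

lemma ff_poly: "s \<le> n \<Longrightarrow> real (ff (n - s) m) = poly (fpoly s m) (real n)"
  unfolding real_ff poly_fpoly by (simp add: of_nat_diff algebra_simps)

lemma fpoly_nonzero: "fpoly s m \<noteq> 0"
  unfolding fpoly_def by (simp add: prod_zero_iff)

lemma poly_eq_from_nat:
  fixes p q :: "real poly"
  assumes "\<And>n. n \<ge> k \<Longrightarrow> poly p (real n) = poly q (real n)"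
  shows "p = q"
proof (rule ccontr)
  assume "p \<noteq> q"
  then have "p - q \<noteq> 0" by simp
  then have fin: "finite {x. poly (p - q) x = 0}" by (rule poly_roots_finite)
  have "real ` {k..} \<subseteq> {x. poly (p - q) x = 0}" using assms by auto
  then have "finite (real ` {k..})" using fin finite_subset by blast
  then have "finite {k..}" using finite_imageD inj_on_def by (metis inj_of_nat inj_on_subset subset_UNIV)
  then show False using infinite_Ici by blast
qed

lemma matching_card_le:
  assumes "S \<in> matchings F" "F \<subseteq> A \<times> B" "finite A"
  shows "card S \<le> card A"
proof -
  have "card S = card (fst ` S)" using assms(1) unfolding matchings_def by (simp add: card_image)
  also have "\<dots> \<le> card A" using assms by (intro card_mono) (auto simp: matchings_def)
  finally show ?thesis .
qed

lemma chrom_formula: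
  fixes A B :: "'a set" and F :: "('a \<times> 'a) set"
  assumes fA: "finite A" and fB: "finite B" and dj: "A \<inter> B = {}" and FAB: "F \<subseteq> A \<times> B"
    and jk: "card A \<le> card B"
  shows "interesting_factor A B F = (\<Sum>S\<in>matchings (A \<times> B - F). fpoly (card B) (card A - card S))"
    and "(\<Sum>S\<in>matchings (A \<times> B - F). fpoly (card B) (card A - card S)) =
         (\<Sum>S\<in>matchings F. smult ((-1) ^ card S) (fpoly (card S) (card A - card S)))"
proof -
  define j where "j = card A"
  define k where "k = card B"
  define Q2 where "Q2 = (\<Sum>S\<in>matchings (A \<times> B - F). fpoly k (j - card S))"
  define Q1 where "Q1 = (\<Sum>S\<in>matchings F. smult ((-1) ^ card S) (fpoly (card S) (j - card S)))"
  define IB where "IB (n::nat) = {\<sigma> \<in> B \<rightarrow>\<^sub>E {..<n}. inj_on \<sigma> B}" for n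
  have cIB: "card (IB n) = ff n k" for n unfolding IB_def k_def using card_inj_ff[OF fB, of "{..<n}"] by simp
  have fIB: "finite (IB n)" for n unfolding IB_def
    by (rule finite_subset[OF _ finite_PiE[OF fB, of "\<lambda>_. {..<n}"]]) auto
  have sub2: "A \<times> B - F \<subseteq> A \<times> B" by auto
  have perS: "real (card (IA A {..<n} (Rs F \<sigma>))) = poly Q2 (real n)" if "\<sigma> \<in> IB n" "k \<le> n" for \<sigma> n
  proof -
    have "real (card (IA A {..<n} (Rs F \<sigma>))) =
      (\<Sum>S\<in>matchings (A \<times> B - F). real (ff (n - card B) (card A - card S)))"
      using card_IA_sigma(2)[OF fA fB FAB] that unfolding IB_def by blast
    also have "\<dots> = poly Q2 (real n)"
      unfolding Q2_def poly_sum using that(2) unfolding k_def j_def by (simp add: ff_poly)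
    finally show ?thesis .
  qed
  have val: "real (card (proper_colorings (A \<union> B) (biclique_adj A B F) n)) = poly (falling_poly k * Q2) (real n)" for n
  proof (cases "k \<le> n")
    case True
    have "real (card (proper_colorings (A \<union> B) (biclique_adj A B F) n)) =
        (\<Sum>\<sigma>\<in>IB n. real (card (IA A {..<n} (Rs F \<sigma>))))"
      unfolding card_proper[OF fA fB dj FAB] IB_def by simp
    also have "\<dots> = (\<Sum>\<sigma>\<in>IB n. poly Q2 (real n))" using perS True by simp
    also have "\<dots> = real (ff n k) * poly Q2 (real n)" using cIB by simp
    also have "real (ff n k) = poly (falling_poly k) (real n)"
      unfolding falling_fpoly using ff_poly[of 0 n k] by simp
    finally show ?thesis by simp
  next
    case False
    have "ff n k = 0" unfolding ff_def using False by (intro prod_zero) auto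
    then have "IB n = {}" using cIB[of n] fIB[of n] by simp
    moreover have "card (proper_colorings (A \<union> B) (biclique_adj A B F) n) = (\<Sum>\<sigma>\<in>IB n. card (IA A {..<n} (Rs F \<sigma>)))"
      unfolding IB_def by (rule card_proper[OF fA fB dj FAB])
    ultimately have "card (proper_colorings (A \<union> B) (biclique_adj A B F) n) = 0" by simp
    moreover have "poly (falling_poly k) (real n) = 0"
      unfolding falling_fpoly using ff_poly[of 0 n k] \<open>ff n k = 0\<close> by simp
    ultimately show ?thesis by simp
  qed
  have chrom: "chromatic_poly (A \<union> B) (biclique_adj A B F) = falling_poly k * Q2"
    unfolding chromatic_poly_def
  proof (rule the_equality)
    show "\<forall>n. poly (falling_poly k * Q2) (real n) = real (card (proper_colorings (A \<union> B) (biclique_adj A B F) n))"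
      using val by simp
    fix p assume "\<forall>n. poly p (real n) = real (card (proper_colorings (A \<union> B) (biclique_adj A B F) n))"
    then show "p = falling_poly k * Q2" using val by (intro poly_eq_from_nat[where k=0]) simp
  qed
  show "interesting_factor A B F = (\<Sum>S\<in>matchings (A \<times> B - F). fpoly (card B) (card A - card S))"
    unfolding interesting_factor_def chrom k_def[symmetric] j_def[symmetric] Q2_def[symmetric]
    using fpoly_nonzero[of 0 k] unfolding falling_fpoly by simp
  have "Q2 = Q1"
  proof (rule poly_eq_from_nat[where k=k])
    fix n assume kn: "k \<le> n"
    have "ff n k \<noteq> 0" unfolding ff_def using kn by simp
    then have "IB n \<noteq> {}" using cIB[of n] by auto
    then obtain \<sigma> where \<sigma>: "\<sigma> \<in> IB n" by blast
    have "poly Q2 (real n) = real (card (IA A {..<n} (Rs F \<sigma>)))" using perS[OF \<sigma> kn] by simp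
    also have "\<dots> = (\<Sum>S\<in>matchings F. (-1) ^ card S * real (ff (n - card S) (card A - card S)))"
      using card_IA_sigma(1)[OF fA fB FAB] \<sigma> unfolding IB_def by blast
    also have "\<dots> = poly Q1 (real n)"
      unfolding Q1_def poly_sum
    proof (rule sum.cong[OF refl])
      fix S assume "S \<in> matchings F"
      then have "card S \<le> n" using matching_card_le[OF _ FAB fA] jk kn unfolding k_def by fastforce
      then show "(-1) ^ card S * real (ff (n - card S) (card A - card S)) =
          poly (smult ((-1) ^ card S) (fpoly (card S) (j - card S))) (real n)"
        unfolding j_def by (simp add: ff_poly)
    qed
    finally show "poly Q2 (real n) = poly Q1 (real n)" .
  qed
  then show "(\<Sum>S\<in>matchings (A \<times> B - F). fpoly (card B) (card A - card S)) =
         (\<Sum>S\<in>matchings F. smult ((-1) ^ card S) (fpoly (card S) (card A - card S)))"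
    unfolding Q1_def Q2_def j_def k_def .
qed

lemma term_id:
  fixes x :: real
  assumes "s \<le> j" "1 \<le> j"
  shows "(-1) ^ s * (\<Prod>i<j - s. x - real s - real i) =
         (-1) ^ j * (\<Prod>i<j - s. real (j + k - 1) - x - real k - real i)"
proof -
  define m where "m = j - s"
  have jm: "j = s + m" using assms unfolding m_def by simp
  have "(\<Prod>i<m. x - real s - real i) = (\<Prod>i<m. x - real s - real (m - Suc i))"
    by (rule prod.nat_diff_reindex[symmetric])
  also have "\<dots> = (\<Prod>i<m. (-1) * (real (j + k - 1) - x - real k - real i))"
  proof (rule prod.cong[OF refl])
    fix i assume "i \<in> {..<m}"
    then have "i < m" by simp
    then show "x - real s - real (m - Suc i) = (-1) * (real (j + k - 1) - x - real k - real i)"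
      using assms unfolding jm by (simp add: of_nat_diff algebra_simps)
  qed
  also have "\<dots> = (-1) ^ m * (\<Prod>i<m. real (j + k - 1) - x - real k - real i)"
    unfolding prod.distrib by simp
  finally show ?thesis unfolding m_def[symmetric] jm by (simp add: power_add)
qed

theorem mainTheorem5:
  fixes A B :: "'a set" and F :: "('a \<times> 'a) set" and j k :: nat
  assumes "finite A" "finite B" "A \<inter> B = {}"
    and "card A = j" "card B = k" "1 \<le> j" "j \<le> k"
    and "F \<subseteq> A \<times> B"
  shows "interesting_factor A B F =
           smult ((-1) ^ j)
             (pcompose (interesting_factor A B (compl_bridges A B F))
                       [:of_nat (j + k - 1), -1:])"
proof -
  have jk: "card A \<le> card B" using assms by simp
  have F': "compl_bridges A B F \<subseteq> A \<times> B" unfolding compl_bridges_def by auto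
  have FF: "A \<times> B - compl_bridges A B F = F" using assms(8) unfolding compl_bridges_def by auto
  have L: "interesting_factor A B F = (\<Sum>S\<in>matchings F. smult ((-1) ^ card S) (fpoly (card S) (j - card S)))"
    using chrom_formula[OF assms(1,2,3,8) jk] assms(4) by simp
  have R: "interesting_factor A B (compl_bridges A B F) = (\<Sum>S\<in>matchings F. fpoly k (j - card S))"
    using chrom_formula(1)[OF assms(1,2,3) F' jk] assms(4,5) unfolding FF by simp
  show ?thesis
    unfolding L R poly_eq_poly_eq_iff[symmetric]
  proof
    fix x :: real
    show "poly (\<Sum>S\<in>matchings F. smult ((-1) ^ card S) (fpoly (card S) (j - card S))) x =
      poly (smult ((-1) ^ j) (pcompose (\<Sum>S\<in>matchings F. fpoly k (j - card S)) [:of_nat (j + k - 1), -1:])) x"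
      unfolding poly_sum poly_smult poly_pcompose sum_distrib_left
    proof (rule sum.cong[OF refl])
      fix S assume "S \<in> matchings F"
      then have "card S \<le> j" using matching_card_le[OF _ assms(8,1)] assms(4) by auto
      then show "(-1) ^ card S * poly (fpoly (card S) (j - card S)) x =
          (-1) ^ j * poly (fpoly k (j - card S)) (poly [:of_nat (j + k - 1), -1:] x)"
        unfolding poly_fpoly using term_id[OF _ assms(6), of "card S" x k] by simp
    qed
  qed
qed

end
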